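(* Let $n\in\mathbb{N}$, let $G=D_n=\langle\sigma,\varrho\mid\sigma^2=e=\varrho^n,\ \sigma\varrho\sigma^{-1}=\varrho^{-1}\rangle$, let $A=\mathbb{C}[[z]]$, and let $\phi:G\to\Aut_{\mathbb{R}}(A)$ be the action given by $\phi_\sigma(\alpha)=\bar\alpha$ for $\alpha\in\mathbb{C}$, $\phi_\sigma(z)=z$, $\phi_\varrho(\alpha)=\alpha$ for $\alpha\in\mathbb{C}$, $\phi_\varrho(z)=\xi z$ with $\xi=\exp(2\pi i/n)$. Then there is an isomorphism of $\mathbb{R}$-algebras $A[G,\phi]\cong M_2(H_n(O))$, where $O=\mathbb{R}[[z^n]]$.
   Context: $A[G,\phi]$ is the skew group ring: the free left $A$-module with basis $\{[g]\}_{g\in G}$ and multiplication $a[f]\cdot b[g]=a\,\phi_f(b)[fg]$. For the complete DVR $O=\mathbb{R}[[z^n]]$, $H_n(O)$ is the ring of $n\times n$ matrices with entries in $O$ on and below the diagonal and in $z^nO$ above the diagonal. *)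

theory Defs
  imports "HOL-Algebra.QuotRing" "HOL-Computational_Algebra.Formal_Power_Series"
begin

text \<open>Skew group ring A[G,phi] of a finite group G over a ring A: the free left A-module
  with basis G, elements u = sum_g u(g)[g] represented by their coefficient functions
  (zero outside carrier G), with a[f] * b[g] = a phi_f(b) [fg].\<close>
definition skew_group_ring ::
  "('g, 'c) monoid_scheme \<Rightarrow> ('a, 'b) ring_scheme \<Rightarrow> ('g \<Rightarrow> 'a \<Rightarrow> 'a) \<Rightarrow> ('g \<Rightarrow> 'a) ring" where
  "skew_group_ring G A \<phi> =
    \<lparr>carrier = {u. (\<forall>g\<in>carrier G. u g \<in> carrier A) \<and> (\<forall>g. g \<notin> carrier G \<longrightarrow> u g = \<zero>\<^bsub>A\<^esub>)},
     monoid.mult = (\<lambda>u v h. if h \<in> carrier G then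
        finsum A (\<lambda>(f, g). if f \<otimes>\<^bsub>G\<^esub> g = h then u f \<otimes>\<^bsub>A\<^esub> \<phi> f (v g) else \<zero>\<^bsub>A\<^esub>)
               (carrier G \<times> carrier G)
        else \<zero>\<^bsub>A\<^esub>),
     one = (\<lambda>g. if g = \<one>\<^bsub>G\<^esub> then \<one>\<^bsub>A\<^esub> else \<zero>\<^bsub>A\<^esub>),
     zero = (\<lambda>g. \<zero>\<^bsub>A\<^esub>),
     add = (\<lambda>u v g. if g \<in> carrier G then u g \<oplus>\<^bsub>A\<^esub> v g else \<zero>\<^bsub>A\<^esub>)\<rparr>"

definition mat_ring :: "('a, 'b) ring_scheme \<Rightarrow> nat \<Rightarrow> (nat \<Rightarrow> nat \<Rightarrow> 'a) ring" where
  "mat_ring R m =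
    \<lparr>carrier = {M. (\<forall>i j. i < m \<and> j < m \<longrightarrow> M i j \<in> carrier R) \<and>
                   (\<forall>i j. \<not> (i < m \<and> j < m) \<longrightarrow> M i j = \<zero>\<^bsub>R\<^esub>)},
     monoid.mult = (\<lambda>M N i j. if i < m \<and> j < m then finsum R (\<lambda>k. M i k \<otimes>\<^bsub>R\<^esub> N k j) {..<m}
                              else \<zero>\<^bsub>R\<^esub>),
     one = (\<lambda>i j. if i < m \<and> j < m \<and> i = j then \<one>\<^bsub>R\<^esub> else \<zero>\<^bsub>R\<^esub>),
     zero = (\<lambda>i j. \<zero>\<^bsub>R\<^esub>),
     add = (\<lambda>M N i j. if i < m \<and> j < m then M i j \<oplus>\<^bsub>R\<^esub> N i j else \<zero>\<^bsub>R\<^esub>)\<rparr>"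

text \<open>Dihedral group D_n of order 2n: the element (s,k) (k < n) stands for sigma^s rho^k.
  Since rho^k sigma = sigma rho^(-k), (s1,k1)(s2,k2) = (s1 xor s2, (+-k1 + k2) mod n).\<close>
definition dihedral :: "nat \<Rightarrow> (bool \<times> nat) monoid" where
  "dihedral n =
    \<lparr>carrier = UNIV \<times> {..<n},
     monoid.mult = (\<lambda>(s1, k1) (s2, k2). (s1 \<noteq> s2, ((if s2 then n - k1 else k1) + k2) mod n)),
     one = (False, 0)\<rparr>"

definition fps_ring :: "'a::comm_ring_1 fps ring" where
  "fps_ring = \<lparr>carrier = UNIV, monoid.mult = (*), one = 1, zero = 0, add = (+)\<rparr>"

definition xi :: "nat \<Rightarrow> complex" where
  "xi n = exp (2 * complex_of_real pi * \<i> / of_nat n)"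

definition phi_sigma :: "complex fps \<Rightarrow> complex fps" where
  "phi_sigma a = Abs_fps (\<lambda>m. cnj (fps_nth a m))"

definition phi_rho :: "nat \<Rightarrow> complex fps \<Rightarrow> complex fps" where
  "phi_rho n a = Abs_fps (\<lambda>m. xi n ^ m * fps_nth a m)"

definition dihedral_action :: "nat \<Rightarrow> bool \<times> nat \<Rightarrow> complex fps \<Rightarrow> complex fps" where
  "dihedral_action n g = (if fst g then phi_sigma else id) \<circ> (phi_rho n ^^ snd g)"

definition skew_ring_Dn :: "nat \<Rightarrow> (bool \<times> nat \<Rightarrow> complex fps) ring" where
  "skew_ring_Dn n = skew_group_ring (dihedral n) (fps_ring :: complex fps ring) (dihedral_action n)"

definition O_set :: "nat \<Rightarrow> real fps set" where
  "O_set n = {f. \<forall>k. \<not> n dvd k \<longrightarrow> fps_nth f k = 0}"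

definition O_ring :: "nat \<Rightarrow> real fps ring" where
  "O_ring n = (fps_ring :: real fps ring)\<lparr>carrier := O_set n\<rparr>"

definition H_ring :: "nat \<Rightarrow> (nat \<Rightarrow> nat \<Rightarrow> real fps) ring" where
  "H_ring n = (mat_ring (O_ring n) n)\<lparr>carrier :=
     {M \<in> carrier (mat_ring (O_ring n) n).
        \<forall>i j. i < j \<and> j < n \<longrightarrow> (\<exists>g \<in> O_set n. M i j = fps_X ^ n * g)}\<rparr>"

definition M2H_ring :: "nat \<Rightarrow> (nat \<Rightarrow> nat \<Rightarrow> (nat \<Rightarrow> nat \<Rightarrow> real fps)) ring" where
  "M2H_ring n = mat_ring (H_ring n) 2"

definition skew_scale :: "real \<Rightarrow> (bool \<times> nat \<Rightarrow> complex fps) \<Rightarrow> (bool \<times> nat \<Rightarrow> complex fps)" where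
  "skew_scale r u = (\<lambda>g. fps_const (complex_of_real r) * u g)"

definition M2H_scale :: "real \<Rightarrow> (nat \<Rightarrow> nat \<Rightarrow> (nat \<Rightarrow> nat \<Rightarrow> real fps))
                          \<Rightarrow> (nat \<Rightarrow> nat \<Rightarrow> (nat \<Rightarrow> nat \<Rightarrow> real fps))" where
  "M2H_scale r M = (\<lambda>i j p q. fps_const r * M i j p q)"

end

theory Submission imports Defs
begin

unbundle fps_syntax


section \<open>Roots of unity\<close>

lemma xi_cis: "xi n = cis (2 * pi / real n)"
  by (simp add: xi_def cis_conv_exp mult_ac)

lemma cis_eq_1: "cis t = 1 \<longleftrightarrow> (\<exists>m::int. t = of_int m * 2 * pi)"
proof
  assume "cis t = 1"
  then have "cos t = 1" by (simp add: complex_eq_iff)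
  then show "\<exists>m::int. t = of_int m * 2 * pi" using cos_one_2pi_int by blast
next
  assume "\<exists>m::int. t = of_int m * 2 * pi"
  then obtain m :: int where "t = 2 * pi * of_int m" by (auto simp: mult_ac)
  then show "cis t = 1" by simp
qed

lemma xi_pow_eq_1:
  assumes "n \<ge> 1"
  shows "xi n ^ d = 1 \<longleftrightarrow> n dvd d"
proof -
  have "xi n ^ d = 1 \<longleftrightarrow> (\<exists>m::int. real d * (2 * pi / real n) = of_int m * 2 * pi)"
    unfolding xi_cis DeMoivre cis_eq_1 by simp
  also have "\<dots> \<longleftrightarrow> (\<exists>m::int. real d = of_int m * real n)"
    using assms by (auto simp: field_simps)
  also have "\<dots> \<longleftrightarrow> n dvd d"
  proof
    assume "\<exists>m::int. real d = of_int m * real n"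
    then obtain m :: int where "real d = of_int m * real n" by blast
    then have "int d = m * int n" by (metis of_int_eq_iff of_int_mult of_int_of_nat_eq)
    then show "n dvd d" by (metis dvd_triv_right int_dvd_int_iff)
  next
    assume "n dvd d" then obtain k where "d = n * k" by blast
    then show "\<exists>m::int. real d = of_int m * real n" by (intro exI[of _ "int k"]) simp
  qed
  finally show ?thesis .
qed

lemma cnj_xi: "cnj (xi n) * xi n = 1"
  by (simp add: xi_cis cis_cnj cis_mult)

definition prim :: "nat \<Rightarrow> complex \<Rightarrow> bool" where
  "prim n w \<longleftrightarrow> (\<forall>d. w ^ d = 1 \<longleftrightarrow> n dvd d)"

lemma prim_xi: "n \<ge> 1 \<Longrightarrow> prim n (xi n)"
  using xi_pow_eq_1 prim_def by blast

lemma prim_cnj: "prim n w \<Longrightarrow> prim n (cnj w)"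
  unfolding prim_def by (metis complex_cnj_one_iff complex_cnj_power)

lemma prim_mod: assumes "prim n w" shows "w ^ m = w ^ (m mod n)"
proof -
  have "w ^ n = 1" using assms unfolding prim_def by simp
  have "w ^ m = w ^ (n * (m div n) + m mod n)" by simp
  also have "\<dots> = (w ^ n) ^ (m div n) * w ^ (m mod n)" by (simp only: power_add power_mult)
  finally show ?thesis using \<open>w ^ n = 1\<close> by simp
qed

lemma dvd_range: assumes "(n::nat) dvd x" "0 < x" "x < 2 * n" shows "x = n"
proof -
  obtain k where k: "x = n * k" using assms(1) by blast
  have "k \<noteq> 0" using k assms(2) by auto
  moreover have "k < 2" using k assms(3) by (metis mult_less_cancel1 mult.commute)
  ultimately have "k = 1" by linarith
  then show ?thesis using k by simp
qed

lemma orth: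
  assumes "prim n w" "n \<ge> 1" "a < n" "b < n"
  shows "(\<Sum>q<n. w ^ (a * q) * w ^ ((n - b) * q)) = (if a = b then of_nat n else 0)"
proof -
  define z where "z = w ^ (a + (n - b))"
  have eq: "w ^ (a * q) * w ^ ((n - b) * q) = z ^ q" for q
    unfolding z_def by (simp add: power_add[symmetric] power_mult[symmetric] algebra_simps)
  have zn: "z ^ n = 1" unfolding z_def power_mult[symmetric]
    using assms(1) unfolding prim_def by simp
  show ?thesis
  proof (cases "a = b")
    case True
    then have "z = 1" unfolding z_def using assms unfolding prim_def by simp
    then show ?thesis using True eq by simp
  next
    case False
    have "\<not> n dvd (a + (n - b))"
    proof
      assume "n dvd (a + (n - b))"
      then have "a + (n - b) = n" using assms False by (intro dvd_range) auto
      then show False using assms False by auto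
    qed
    then have "z \<noteq> 1" unfolding z_def using assms(1) unfolding prim_def by simp
    then show ?thesis using False eq zn by (simp add: sum_gp_strict)
  qed
qed

definition cj :: "bool \<Rightarrow> complex \<Rightarrow> complex" where
  "cj s z = (if s then cnj z else z)"

lemma cj_mult: "cj s (a * b) = cj s a * cj s b" by (simp add: cj_def)
lemma cj_add: "cj s (a + b) = cj s a + cj s b" by (simp add: cj_def)
lemma cj_sum: "cj s (sum f A) = (\<Sum>x\<in>A. cj s (f x))" by (simp add: cj_def)
lemma cj_real: "cj s (complex_of_real r) = complex_of_real r" by (simp add: cj_def)
lemma cj_0: "cj s 0 = 0" by (simp add: cj_def)

lemma rho_pow_nth: "(phi_rho n ^^ k) b $ m = xi n ^ (k * m) * b $ m"
  by (induction k) (simp_all add: phi_rho_def power_add mult_ac)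

lemma act_nth: "dihedral_action n (s, k) b $ m = cj s (xi n ^ (k * m) * b $ m)"
  by (cases s) (simp_all add: dihedral_action_def phi_sigma_def cj_def rho_pow_nth)

lemma act_add: "dihedral_action n g (x + y) = dihedral_action n g x + dihedral_action n g y"
  by (cases g) (rule fps_ext, simp add: act_nth distrib_left cj_add)

lemma act_sum: "dihedral_action n g (sum f A) = (\<Sum>a\<in>A. dihedral_action n g (f a))"
  by (cases g) (rule fps_ext, simp add: act_nth fps_sum_nth sum_distrib_left cj_sum)

lemma act_mult: "dihedral_action n g (x * y) = dihedral_action n g x * dihedral_action n g y"
proof (cases g)
  case (Pair s k)
  show ?thesis
  proof (rule fps_ext)
    fix m
    have "xi n ^ (k * m) * (x * y) $ m = (\<Sum>i=0..m. (xi n ^ (k * i) * x $ i) * (xi n ^ (k * (m - i)) * y $ (m - i)))"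
      unfolding fps_mult_nth sum_distrib_left
    proof (rule sum.cong)
      fix i assume "i \<in> {0..m}"
      then have "k * m = k * i + k * (m - i)" by (simp add: diff_mult_distrib2)
      then show "xi n ^ (k * m) * (x $ i * y $ (m - i)) = xi n ^ (k * i) * x $ i * (xi n ^ (k * (m - i)) * y $ (m - i))"
        by (simp add: power_add mult_ac)
    qed simp
    then show "dihedral_action n g (x * y) $ m = (dihedral_action n g x * dihedral_action n g y) $ m"
      using Pair by (simp add: act_nth fps_mult_nth cj_sum cj_mult)
  qed
qed

definition emb :: "real fps \<Rightarrow> complex fps" where
  "emb f = Abs_fps (\<lambda>m. complex_of_real (f $ m))"

lemma emb_nth [simp]: "emb f $ m = complex_of_real (f $ m)" by (simp add: emb_def)

lemma O_set_nth: "f \<in> O_set n \<Longrightarrow> \<not> n dvd k \<Longrightarrow> f $ k = 0"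
  by (simp add: O_set_def)

definition ReIm :: "nat \<Rightarrow> complex fps \<Rightarrow> real fps" where
  "ReIm i x = Abs_fps (\<lambda>m. if i = 0 then Re (x $ m) else Im (x $ m))"

definition Sp :: "nat \<Rightarrow> nat \<Rightarrow> complex fps \<Rightarrow> complex fps" where
  "Sp n p x = Abs_fps (\<lambda>m. if n dvd m then x $ (p + m) else 0)"

definition crd :: "nat \<Rightarrow> complex fps \<Rightarrow> nat \<Rightarrow> nat \<Rightarrow> real fps" where
  "crd n x i p = ReIm i (Sp n p x)"

definition ee :: "nat \<Rightarrow> complex" where
  "ee i = (if i = 0 then 1 else \<i>)"

definition E :: "nat \<Rightarrow> nat \<Rightarrow> complex fps" where
  "E j q = fps_const (ee j) * fps_X ^ q"

lemma sum2: "(\<Sum>i<2. f i) = f 0 + f (1::nat)"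
  by (simp add: numeral_2_eq_2)

lemma E_mult_nth: "(E j q * f) $ m = ee j * (if m < q then 0 else f $ (m - q))"
  by (simp add: E_def mult.assoc fps_X_power_mult_nth)

lemma emb_add: "emb (a + b) = emb a + emb b" by (rule fps_ext) simp
lemma emb_mult: "emb (a * b) = emb a * emb b" by (rule fps_ext) (simp add: fps_mult_nth)
lemma emb_const: "emb (fps_const r) = fps_const (complex_of_real r)" by (rule fps_ext) simp

lemma crd_add: "crd n (x + y) i p = crd n x i p + crd n y i p"
  by (rule fps_ext) (simp add: crd_def ReIm_def Sp_def)

lemma crd_sum: "crd n (sum f A) i p = (\<Sum>a\<in>A. crd n (f a) i p)"
  by (rule fps_ext) (simp add: crd_def ReIm_def Sp_def fps_sum_nth)

lemma crd_O: "crd n x i p \<in> O_set n"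
  by (simp add: crd_def ReIm_def Sp_def O_set_def)

lemma ReIm_lin: "ReIm i (emb c * y) = c * ReIm i y"
  by (rule fps_ext) (simp add: ReIm_def fps_mult_nth)

definition T :: "nat \<Rightarrow> (bool \<times> nat \<Rightarrow> complex fps) \<Rightarrow> complex fps \<Rightarrow> complex fps" where
  "T n u b = (\<Sum>g\<in>UNIV \<times> {..<n}. u g * dihedral_action n g b)"

definition PP :: "nat \<Rightarrow> (bool \<times> nat \<Rightarrow> complex fps) \<Rightarrow> nat \<Rightarrow> complex fps" where
  "PP n u q = (\<Sum>k<n. u (False, k) * fps_const (xi n ^ (k * q)))"

definition QQ :: "nat \<Rightarrow> (bool \<times> nat \<Rightarrow> complex fps) \<Rightarrow> nat \<Rightarrow> complex fps" where
  "QQ n u q = (\<Sum>k<n. u (True, k) * fps_const (cnj (xi n ^ (k * q))))"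

lemma sum_G: "(\<Sum>g\<in>UNIV \<times> A. f g) = (\<Sum>k\<in>A. f (False, k)) + (\<Sum>k\<in>A. f (True, k))"
proof -
  have "(\<Sum>g\<in>UNIV \<times> A. f g) = (\<Sum>s\<in>UNIV. \<Sum>k\<in>A. f (s, k))"
    by (simp add: sum.cartesian_product)
  then show ?thesis by (simp add: UNIV_bool add.commute)
qed

lemma if_mult: "(if P then x else 0) * y = (if P then x * y else (0::'a::mult_zero))"
  by simp

lemma finsum_eq_sum:
  fixes R (structure)
  assumes R: "abelian_monoid R" and add: "\<And>x y. x \<oplus> y = x + y" and z: "\<zero> = 0"
    and A: "finite A" and f: "f ` A \<subseteq> carrier R"
  shows "finsum R f A = sum f A"
  using A f
proof (induction A rule: finite_induct)
  case empty then show ?case using abelian_monoid.finsum_empty[OF R] z by simp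
next
  case (insert a A)
  then have "finsum R f (insert a A) = f a \<oplus> finsum R f A"
    by (intro abelian_monoid.finsum_insert[OF R]) auto
  then show ?case using insert add by simp
qed

lemma fps_ring_simps [simp]:
  "x \<oplus>\<^bsub>fps_ring\<^esub> y = x + y" "x \<otimes>\<^bsub>fps_ring\<^esub> y = x * y"
  "\<zero>\<^bsub>fps_ring\<^esub> = 0" "\<one>\<^bsub>fps_ring\<^esub> = 1" "carrier fps_ring = UNIV"
  by (simp_all add: fps_ring_def)

lemma fps_ring_am: "abelian_monoid (fps_ring :: 'a::comm_ring_1 fps ring)"
  by (rule abelian_monoidI) (simp_all add: fps_ring_def add.assoc add.commute)

lemma finsum_fps: "finite A \<Longrightarrow> finsum (fps_ring :: 'a::comm_ring_1 fps ring) f A = sum f A"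
  by (rule finsum_eq_sum[OF fps_ring_am]) (simp_all add: fps_ring_def)

lemma dmul: "(s1, k1) \<otimes>\<^bsub>dihedral n\<^esub> (s2, k2) = (s1 \<noteq> s2, ((if s2 then n - k1 else k1) + k2) mod n)"
  by (simp add: dihedral_def)

lemma dcarrier: "carrier (dihedral n) = UNIV \<times> {..<n}"
  by (simp add: dihedral_def)

lemma skew_carrier: "carrier (skew_ring_Dn n) = {u. \<forall>g. g \<notin> UNIV \<times> {..<n} \<longrightarrow> u g = 0}"
  by (simp add: skew_ring_Dn_def skew_group_ring_def dcarrier fps_ring_def)

lemma skew_mult: "h \<in> UNIV \<times> {..<n} \<Longrightarrow> (u \<otimes>\<^bsub>skew_ring_Dn n\<^esub> v) h =
   (\<Sum>f\<in>UNIV \<times> {..<n}. \<Sum>g\<in>UNIV \<times> {..<n}. if f \<otimes>\<^bsub>dihedral n\<^esub> g = h then u f * dihedral_action n f (v g) else 0)"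
  by (simp add: skew_ring_Dn_def skew_group_ring_def dcarrier finsum_fps sum.cartesian_product cong: if_cong)

lemma skew_add: "u \<oplus>\<^bsub>skew_ring_Dn n\<^esub> v = (\<lambda>g. if g \<in> UNIV \<times> {..<n} then u g + v g else 0)"
  by (rule ext) (simp add: skew_ring_Dn_def skew_group_ring_def dcarrier)

lemma skew_one: "\<one>\<^bsub>skew_ring_Dn n\<^esub> = (\<lambda>g. if g = (False, 0) then 1 else 0)"
  by (rule ext) (simp add: skew_ring_Dn_def skew_group_ring_def dihedral_def)


lemma O_simps [simp]:
  "carrier (O_ring n) = O_set n" "x \<oplus>\<^bsub>O_ring n\<^esub> y = x + y" "\<zero>\<^bsub>O_ring n\<^esub> = 0"
  "x \<otimes>\<^bsub>O_ring n\<^esub> y = x * y" "\<one>\<^bsub>O_ring n\<^esub> = 1"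
  by (simp_all add: O_ring_def fps_ring_def)

lemma H_add: "M \<oplus>\<^bsub>H_ring n\<^esub> N = (\<lambda>p q. if p < n \<and> q < n then M p q + N p q else 0)"
  by (intro ext) (simp add: H_ring_def mat_ring_def)

lemma H_zero: "\<zero>\<^bsub>H_ring n\<^esub> = (\<lambda>p q. 0)"
  by (intro ext) (simp add: H_ring_def mat_ring_def)

lemma H_one: "\<one>\<^bsub>H_ring n\<^esub> = (\<lambda>p q. if p < n \<and> q < n \<and> p = q then 1 else 0)"
  by (intro ext) (simp add: H_ring_def mat_ring_def)

lemma H_mult0: "M \<otimes>\<^bsub>H_ring n\<^esub> N = (\<lambda>p q. if p < n \<and> q < n then finsum (O_ring n) (\<lambda>r. M p r * N r q) {..<n} else 0)"
  by (intro ext) (simp add: H_ring_def mat_ring_def)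

lemma H_carrier0: "carrier (H_ring n) = {M. (\<forall>p q. p < n \<and> q < n \<longrightarrow> M p q \<in> O_set n) \<and> (\<forall>p q. \<not> (p < n \<and> q < n) \<longrightarrow> M p q = 0)
   \<and> (\<forall>p q. p < q \<and> q < n \<longrightarrow> (\<exists>g\<in>O_set n. M p q = fps_X ^ n * g))}"
  by (auto simp: H_ring_def mat_ring_def)

lemma M2_carrier: "carrier (M2H_ring n) = {M. (\<forall>i j. i < 2 \<and> j < 2 \<longrightarrow> M i j \<in> carrier (H_ring n)) \<and> (\<forall>i j. \<not> (i < 2 \<and> j < 2) \<longrightarrow> M i j = (\<lambda>p q. 0))}"
  by (simp add: M2H_ring_def mat_ring_def H_zero)

lemma M2_add: "M \<oplus>\<^bsub>M2H_ring n\<^esub> N = (\<lambda>i j. if i < 2 \<and> j < 2 then M i j \<oplus>\<^bsub>H_ring n\<^esub> N i j else (\<lambda>p q. 0))"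
  by (intro ext) (simp add: M2H_ring_def mat_ring_def H_zero)

lemma M2_mult: "M \<otimes>\<^bsub>M2H_ring n\<^esub> N = (\<lambda>i j. if i < 2 \<and> j < 2 then finsum (H_ring n) (\<lambda>k. M i k \<otimes>\<^bsub>H_ring n\<^esub> N k j) {..<2} else (\<lambda>p q. 0))"
  by (intro ext) (simp add: M2H_ring_def mat_ring_def H_zero)

lemma M2_one: "\<one>\<^bsub>M2H_ring n\<^esub> = (\<lambda>i j. if i < 2 \<and> j < 2 \<and> i = j then \<one>\<^bsub>H_ring n\<^esub> else (\<lambda>p q. 0))"
  by (intro ext) (simp add: M2H_ring_def mat_ring_def H_zero)

definition hh :: "nat \<Rightarrow> (bool \<times> nat \<Rightarrow> complex fps) \<Rightarrow> nat \<Rightarrow> nat \<Rightarrow> nat \<Rightarrow> nat \<Rightarrow> real fps" where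
  "hh n u = (\<lambda>i j p q. if i < 2 \<and> j < 2 \<and> p < n \<and> q < n then crd n (T n u (E j q)) i p else 0)"

lemma fps_const_sum: "fps_const (sum f A) = (\<Sum>x\<in>A. fps_const (f x))"
  by (induct A rule: infinite_finite_induct) (simp_all add: fps_const_add[symmetric] del: fps_const_add)

lemma X_cancel: "a * fps_X ^ q = b * fps_X ^ q \<Longrightarrow> a = b"
  by (metis fps_shift_times_fps_X_power')

lemma two_eqs:
  fixes a b c d :: "complex fps"
  assumes "a + b = c + d" "a * fps_const \<i> + b * fps_const (- \<i>) = c * fps_const \<i> + d * fps_const (- \<i>)"
  shows "a = c \<and> b = d"
proof -
  have r: "(x * fps_const \<i> + y * fps_const (- \<i>)) * fps_const (- \<i>) = x - y" for x y :: "complex fps"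
  proof -
    have "(x * fps_const \<i> + y * fps_const (- \<i>)) * fps_const (- \<i>) = x * (fps_const \<i> * fps_const (- \<i>)) + y * (fps_const (- \<i>) * fps_const (- \<i>))"
      by (simp only: distrib_right mult.assoc)
    also have "fps_const \<i> * fps_const (- \<i>) = (1 :: complex fps)" by (simp only: fps_const_mult) simp
    also have "fps_const (- \<i>) * fps_const (- \<i>) = (- 1 :: complex fps)"
    proof -
      have "(- \<i>) * (- \<i>) = (- 1 :: complex)" by simp
      then have "fps_const (- \<i>) * fps_const (- \<i>) = fps_const (- 1 :: complex)" by (simp only: fps_const_mult)
      also have "fps_const (- 1 :: complex) = - fps_const 1" by (simp only: fps_const_neg)
      finally show ?thesis by simp
    qed
    finally show ?thesis by simp
  qed
  have "(a * fps_const \<i> + b * fps_const (- \<i>)) * fps_const (- \<i>) = a - b" by (rule r)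
  moreover have "(c * fps_const \<i> + d * fps_const (- \<i>)) * fps_const (- \<i>) = c - d" by (rule r)
  ultimately have "a - b = c - d" using assms(2) by simp
  then have "(a + b) + (a - b) = (c + d) + (c - d)" using assms(1) by simp
  then have "2 * a = 2 * c" by (simp add: algebra_simps mult_2)
  then have ac: "a = c" by simp
  then show ?thesis using assms(1) by simp
qed

lemma half_eqs:
  fixes y0 y1 :: "complex fps"
  shows "fps_const (1/2) * (y0 - fps_const \<i> * y1) + fps_const (1/2) * (y0 + fps_const \<i> * y1) = y0"
    and "fps_const (1/2) * (y0 - fps_const \<i> * y1) * fps_const \<i> + fps_const (1/2) * (y0 + fps_const \<i> * y1) * fps_const (- \<i>) = y1"
  by (simp add: algebra_simps fps_numeral_fps_const) (rule fps_ext, simp add: algebra_simps)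

locale nctx = fixes n :: nat assumes n1: "n \<ge> 1"
begin

unbundle fps_syntax

lemma act_emb: "c \<in> O_set n \<Longrightarrow> dihedral_action n g (emb c) = emb c"
proof (cases g)
  case (Pair s k)
  assume c: "c \<in> O_set n"
  show ?thesis
  proof (rule fps_ext)
    fix m
    show "dihedral_action n g (emb c) $ m = emb c $ m"
    proof (cases "n dvd m")
      case True
      then have "xi n ^ (k * m) = 1" using xi_pow_eq_1[OF n1] by simp
      then show ?thesis using Pair by (simp add: act_nth cj_real)
    next
      case False then show ?thesis using Pair c by (simp add: act_nth O_set_nth cj_0)
    qed
  qed
qed


lemma xi_mod: "xi n ^ m = xi n ^ (m mod n)"
  using prim_mod[OF prim_xi[OF n1]] .

lemma xi_n: "xi n ^ n = 1" using xi_pow_eq_1[OF n1] by simp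

lemma cnj_xi_pow: "k \<le> n \<Longrightarrow> cnj (xi n) ^ ((n - k) * m) = xi n ^ (k * m)"
proof -
  assume k: "k \<le> n"
  define c where "c = xi n ^ ((n - k) * m)"
  have a: "cnj (xi n) ^ ((n - k) * m) * c = 1"
    unfolding c_def power_mult_distrib[symmetric] cnj_xi by simp
  have "k * m + (n - k) * m = n * m" using k by (simp add: add_mult_distrib[symmetric])
  then have b: "xi n ^ (k * m) * c = 1"
    unfolding c_def power_add[symmetric] by (simp add: power_mult xi_n)
  have "cnj (xi n) ^ ((n - k) * m) = cnj (xi n) ^ ((n - k) * m) * (xi n ^ (k * m) * c)"
    using b by simp
  also have "\<dots> = xi n ^ (k * m) * (cnj (xi n) ^ ((n - k) * m) * c)" by (simp add: mult_ac)
  finally show ?thesis using a by simp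
qed

lemma act_comp:
  assumes "k1 \<le> n"
  shows "dihedral_action n (s1 \<noteq> s2, ((if s2 then n - k1 else k1) + k2) mod n) b
       = dihedral_action n (s1, k1) (dihedral_action n (s2, k2) b)"
proof (rule fps_ext)
  fix m
  have xm: "xi n ^ ((((if s2 then n - k1 else k1) + k2) mod n) * m) = xi n ^ (((if s2 then n - k1 else k1) + k2) * m)"
    by (metis power_mult xi_mod)
  show "dihedral_action n (s1 \<noteq> s2, ((if s2 then n - k1 else k1) + k2) mod n) b $ m
       = dihedral_action n (s1, k1) (dihedral_action n (s2, k2) b) $ m"
  proof (cases s2)
    case False
    then show ?thesis unfolding act_nth xm by (simp add: cj_def add_mult_distrib add_mult_distrib2 power_add mult_ac)
  next
    case True
    have "cnj (xi n ^ ((n - k1 + k2) * m) * b $ m) = xi n ^ (k1 * m) * cnj (xi n ^ (k2 * m) * b $ m)"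
    proof -
      have e: "cnj (xi n) ^ ((n - k1 + k2) * m) = cnj (xi n) ^ ((n - k1) * m) * cnj (xi n) ^ (k2 * m)"
        by (simp only: add_mult_distrib power_add)
      have "cnj (xi n ^ ((n - k1 + k2) * m) * b $ m) = cnj (xi n) ^ ((n - k1 + k2) * m) * cnj (b $ m)"
        by (simp only: complex_cnj_mult complex_cnj_power)
      also have "\<dots> = xi n ^ (k1 * m) * (cnj (xi n) ^ (k2 * m) * cnj (b $ m))"
        unfolding e cnj_xi_pow[OF assms] by (simp only: mult.assoc)
      also have "\<dots> = xi n ^ (k1 * m) * cnj (xi n ^ (k2 * m) * b $ m)"
        by (simp only: complex_cnj_mult complex_cnj_power)
      finally show ?thesis .
    qed
    note hE = this
    have G: "cj (s1 \<noteq> True) (xi n ^ ((n - k1 + k2) * m) * b $ m) = cj s1 (xi n ^ (k1 * m) * cj True (xi n ^ (k2 * m) * b $ m))"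
    proof (cases s1)
      case True
      then show ?thesis unfolding cj_def by (simp only: if_True if_False hE[symmetric] complex_cnj_cnj) simp
    next
      case False
      then show ?thesis unfolding cj_def by (simp only: if_True if_False hE[symmetric]) simp
    qed
    show ?thesis using True G unfolding act_nth xm by simp
  qed
qed

lemma act_const_X: "dihedral_action n (s, k) (fps_const c * fps_X ^ q) = fps_const (cj s (xi n ^ (k * q) * c)) * fps_X ^ q"
  by (rule fps_ext) (simp add: act_nth cj_0)

lemma O_mult: assumes "f \<in> O_set n" "g \<in> O_set n" shows "f * g \<in> O_set n"
  unfolding O_set_def
proof (intro CollectI allI impI)
  fix k assume k: "\<not> n dvd k"
  have "f $ i * g $ (k - i) = 0" if "i \<in> {0..k}" for i
  proof (cases "n dvd i")
    case True
    then have "\<not> n dvd (k - i)" using k that by (metis atLeastAtMost_iff dvd_add le_add_diff_inverse)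
    then show ?thesis using assms(2) by (simp add: O_set_nth)
  next
    case False then show ?thesis using assms(1) by (simp add: O_set_nth)
  qed
  then show "(f * g) $ k = 0" unfolding fps_mult_nth by (intro sum.neutral) blast
qed

lemma O_add: "f \<in> O_set n \<Longrightarrow> g \<in> O_set n \<Longrightarrow> f + g \<in> O_set n"
  by (simp add: O_set_def)

lemma O_zero: "0 \<in> O_set n" by (simp add: O_set_def)

lemma O_one: "1 \<in> O_set n" by (simp add: O_set_def)

lemma O_const: "fps_const r \<in> O_set n" by (simp add: O_set_def)

lemma O_sum: "(\<And>a. a \<in> A \<Longrightarrow> f a \<in> O_set n) \<Longrightarrow> sum f A \<in> O_set n"
  by (simp add: O_set_def fps_sum_nth)

lemma O_shift: "f \<in> O_set n \<Longrightarrow> fps_shift n f \<in> O_set n"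
  unfolding O_set_def by auto

lemma XnO_iff:
  assumes "f \<in> O_set n"
  shows "(\<exists>g\<in>O_set n. f = fps_X ^ n * g) \<longleftrightarrow> f $ 0 = 0"
proof
  assume "\<exists>g\<in>O_set n. f = fps_X ^ n * g"
  then show "f $ 0 = 0" using n1 by (auto simp: fps_X_power_mult_nth)
next
  assume f0: "f $ 0 = 0"
  have low: "f $ k = 0" if "k < n" for k
  proof (cases "k = 0")
    case True then show ?thesis using f0 by simp
  next
    case False
    then have "\<not> n dvd k" using that by (auto dest: dvd_imp_le)
    then show ?thesis using assms by (simp add: O_set_nth)
  qed
  have "f = fps_X ^ n * fps_shift n f"
    by (rule fps_ext) (simp add: fps_X_power_mult_nth low)
  then show "\<exists>g\<in>O_set n. f = fps_X ^ n * g" using O_shift[OF assms] by blast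
qed


section \<open>Coordinates\<close>

lemma Sp_lin:
  assumes c: "c \<in> O_set n" and p: "p < n"
  shows "Sp n p (emb c * x) = emb c * Sp n p x"
proof (rule fps_ext)
  fix m
  show "Sp n p (emb c * x) $ m = (emb c * Sp n p x) $ m"
  proof (cases "n dvd m")
    case True
    have "(emb c * x) $ (p + m) = (\<Sum>a=0..p+m. complex_of_real (c $ a) * x $ (p + m - a))"
      by (simp add: fps_mult_nth)
    also have "\<dots> = (\<Sum>a=0..m. complex_of_real (c $ a) * x $ (p + m - a))"
    proof (rule sum.mono_neutral_right)
      show "\<forall>a\<in>{0..p + m} - {0..m}. complex_of_real (c $ a) * x $ (p + m - a) = 0"
      proof
        fix a assume a: "a \<in> {0..p + m} - {0..m}"
        have "\<not> n dvd a"
        proof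
          assume "n dvd a"
          then have "n dvd a - m" using True by (simp add: dvd_diff_nat)
          moreover have "0 < a - m" "a - m < n" using a p by auto
          ultimately show False by (auto dest: dvd_imp_le)
        qed
        then show "complex_of_real (c $ a) * x $ (p + m - a) = 0" using c by (simp add: O_set_nth)
      qed
    qed auto
    also have "\<dots> = (\<Sum>a=0..m. complex_of_real (c $ a) * (if n dvd (m - a) then x $ (p + (m - a)) else 0))"
    proof (rule sum.cong)
      fix a assume a: "a \<in> {0..m}"
      show "complex_of_real (c $ a) * x $ (p + m - a) = complex_of_real (c $ a) * (if n dvd (m - a) then x $ (p + (m - a)) else 0)"
      proof (cases "n dvd a")
        case True
        then have "n dvd (m - a)" using \<open>n dvd m\<close> by (simp add: dvd_diff_nat)
        then show ?thesis using a by simp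
      next
        case False then show ?thesis using c by (simp add: O_set_nth)
      qed
    qed simp
    finally show ?thesis using True by (simp add: Sp_def fps_mult_nth)
  next
    case False
    have "complex_of_real (c $ a) * (if n dvd (m - a) then x $ (p + (m - a)) else 0) = 0" if "a \<in> {0..m}" for a
    proof (cases "n dvd a")
      case True
      then have "\<not> n dvd (m - a)" using False that by (metis atLeastAtMost_iff dvd_add le_add_diff_inverse)
      then show ?thesis by simp
    next
      case False then show ?thesis using c by (simp add: O_set_nth)
    qed
    then have "(\<Sum>a=0..m. complex_of_real (c $ a) * (if n dvd (m - a) then x $ (p + (m - a)) else 0)) = 0"
      by (intro sum.neutral) blast
    then show ?thesis using False by (simp add: Sp_def fps_mult_nth)
  qed
qed

lemma crd_lin: "c \<in> O_set n \<Longrightarrow> p < n \<Longrightarrow> crd n (emb c * x) i p = c * crd n x i p"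
  by (simp add: crd_def Sp_lin ReIm_lin)

lemma mod_char: "p < n \<Longrightarrow> (\<not> m < p \<and> n dvd (m - p)) \<longleftrightarrow> p = m mod n"
proof
  assume p: "p < n" and h: "\<not> m < p \<and> n dvd (m - p)"
  then obtain t where "m - p = n * t" by blast
  then have "m = p + n * t" using h by simp
  then show "p = m mod n" using p by simp
next
  assume p: "p < n" and h: "p = m mod n"
  have "m mod n \<le> m" by simp
  then show "\<not> m < p \<and> n dvd (m - p)" using h by (simp add: minus_mod_eq_mult_div not_less)
qed

lemma decomp_nth:
  assumes c: "\<And>i p. c i p \<in> O_set n"
  shows "(\<Sum>i<2. \<Sum>p<n. E i p * emb (c i p)) $ m
       = (\<Sum>i<2. ee i * complex_of_real (c i (m mod n) $ (m - m mod n)))"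
proof -
  have t: "(E i p * emb (c i p)) $ m = (if p = m mod n then ee i * complex_of_real (c i (m mod n) $ (m - m mod n)) else 0)"
    if p: "p < n" for i p
  proof (cases "p = m mod n")
    case True
    then have "\<not> m < p" by (simp add: not_less mod_less_eq_dividend)
    then show ?thesis using True by (simp add: E_mult_nth)
  next
    case False
    then have "m < p \<or> \<not> n dvd (m - p)" using mod_char[OF p, of m] by blast
    then show ?thesis using False O_set_nth[OF c] by (auto simp: E_mult_nth)
  qed
  have "(\<Sum>i<2. \<Sum>p<n. E i p * emb (c i p)) $ m = (\<Sum>i<2. \<Sum>p<n. (E i p * emb (c i p)) $ m)"
    by (simp add: fps_sum_nth)
  also have "\<dots> = (\<Sum>i<2. \<Sum>p<n. (if p = m mod n then ee i * complex_of_real (c i (m mod n) $ (m - m mod n)) else 0))"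
    using t by simp
  also have "\<dots> = (\<Sum>i<2. ee i * complex_of_real (c i (m mod n) $ (m - m mod n)))"
    using n1 by simp
  finally show ?thesis .
qed

lemma recon: "x = (\<Sum>i<2. \<Sum>p<n. E i p * emb (crd n x i p))"
proof (rule fps_ext)
  fix m
  have "n dvd (m - m mod n)" by (simp add: minus_mod_eq_mult_div)
  moreover have "m mod n + (m - m mod n) = m" by simp
  ultimately have "crd n x i (m mod n) $ (m - m mod n) = (if i = 0 then Re (x $ m) else Im (x $ m))" for i
    by (simp add: crd_def ReIm_def Sp_def)
  then show "x $ m = (\<Sum>i<2. \<Sum>p<n. E i p * emb (crd n x i p)) $ m"
    using decomp_nth[of "\<lambda>i p. crd n x i p" m] crd_O unfolding sum2 by (simp add: ee_def complex_eq[symmetric])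
qed

lemma uniq:
  assumes c: "\<And>i p. c i p \<in> O_set n" and k: "k < 2" and q: "q < n"
  shows "crd n (\<Sum>i<2. \<Sum>p<n. E i p * emb (c i p)) k q = c k q"
proof (rule fps_ext)
  fix m
  show "crd n (\<Sum>i<2. \<Sum>p<n. E i p * emb (c i p)) k q $ m = c k q $ m"
  proof (cases "n dvd m")
    case True
    then have "(q + m) mod n = q" "q + m - (q + m) mod n = m" using q by auto
    moreover have "(\<Sum>i<2. \<Sum>p<n. E i p * emb (c i p)) $ (q + m) = (\<Sum>i<2. ee i * complex_of_real (c i ((q + m) mod n) $ (q + m - (q + m) mod n)))"
      by (rule decomp_nth[OF c])
    moreover have "k = 0 \<or> k = 1" using k by auto
    ultimately show ?thesis using True unfolding crd_def ReIm_def Sp_def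
      by (auto simp: sum2 ee_def)
  next
    case False then show ?thesis using O_set_nth[OF c] by (simp add: crd_def ReIm_def Sp_def)
  qed
qed


section \<open>The operator T\<close>

lemma T_add_arg: "T n u (x + y) = T n u x + T n u y"
  by (simp add: T_def act_add distrib_left sum.distrib)

lemma T_sum_arg: "T n u (sum f A) = (\<Sum>a\<in>A. T n u (f a))"
  unfolding T_def act_sum sum_distrib_left by (rule sum.swap)

lemma T_lin: "c \<in> O_set n \<Longrightarrow> T n u (emb c * x) = emb c * T n u x"
  by (simp add: T_def act_mult act_emb sum_distrib_left mult_ac)

lemma T_basis: "T n u (fps_const c * fps_X ^ q) = (PP n u q * fps_const c + QQ n u q * fps_const (cnj c)) * fps_X ^ q"
proof -
  have "T n u (fps_const c * fps_X ^ q) =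
    (\<Sum>k<n. u (False, k) * (fps_const (xi n ^ (k * q)) * (fps_const c * fps_X ^ q))) +
    (\<Sum>k<n. u (True, k) * (fps_const (cnj (xi n ^ (k * q))) * (fps_const (cnj c) * fps_X ^ q)))"
    unfolding T_def sum_G act_const_X by (simp add: cj_def mult_ac fps_const_mult[symmetric] del: fps_const_mult)
  also have "\<dots> = (PP n u q * fps_const c + QQ n u q * fps_const (cnj c)) * fps_X ^ q"
    unfolding PP_def QQ_def by (simp add: sum_distrib_left sum_distrib_right distrib_left distrib_right mult_ac)
  finally show ?thesis .
qed

lemma dmul_in: "f \<in> UNIV \<times> {..<n} \<Longrightarrow> g \<in> UNIV \<times> {..<n} \<Longrightarrow> f \<otimes>\<^bsub>dihedral n\<^esub> g \<in> UNIV \<times> {..<n}"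
  using n1 by (cases f, cases g) (simp add: dmul)

lemma act_dmul: assumes "f \<in> UNIV \<times> {..<n}"
  shows "dihedral_action n (f \<otimes>\<^bsub>dihedral n\<^esub> g) b = dihedral_action n f (dihedral_action n g b)"
proof -
  obtain s1 k1 s2 k2 where fg: "f = (s1, k1)" "g = (s2, k2)" by (cases f, cases g) auto
  then have "k1 \<le> n" using assms by auto
  then show ?thesis unfolding fg dmul by (rule act_comp)
qed

lemma T_mult: "T n (u \<otimes>\<^bsub>skew_ring_Dn n\<^esub> v) b = T n u (T n v b)"
proof -
  let ?C = "UNIV \<times> {..<n} :: (bool \<times> nat) set"
  let ?a = "dihedral_action n"
  have "T n (u \<otimes>\<^bsub>skew_ring_Dn n\<^esub> v) b =
     (\<Sum>h\<in>?C. (\<Sum>f\<in>?C. \<Sum>g\<in>?C. if f \<otimes>\<^bsub>dihedral n\<^esub> g = h then u f * ?a f (v g) else 0) * ?a h b)"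
    unfolding T_def by (rule sum.cong) (simp_all add: skew_mult)
  also have "\<dots> = (\<Sum>h\<in>?C. \<Sum>f\<in>?C. \<Sum>g\<in>?C. if f \<otimes>\<^bsub>dihedral n\<^esub> g = h then u f * ?a f (v g) * ?a h b else 0)"
    by (simp add: sum_distrib_right if_mult cong: if_cong)
  also have "\<dots> = (\<Sum>f\<in>?C. \<Sum>h\<in>?C. \<Sum>g\<in>?C. if f \<otimes>\<^bsub>dihedral n\<^esub> g = h then u f * ?a f (v g) * ?a h b else 0)"
    by (rule sum.swap)
  also have "\<dots> = (\<Sum>f\<in>?C. \<Sum>g\<in>?C. \<Sum>h\<in>?C. if f \<otimes>\<^bsub>dihedral n\<^esub> g = h then u f * ?a f (v g) * ?a h b else 0)"
    by (rule sum.cong[OF refl], rule sum.swap)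
  also have "\<dots> = (\<Sum>f\<in>?C. \<Sum>g\<in>?C. u f * ?a f (v g) * ?a (f \<otimes>\<^bsub>dihedral n\<^esub> g) b)"
    by (rule sum.cong[OF refl], rule sum.cong[OF refl]) (simp add: dmul_in)
  also have "\<dots> = (\<Sum>f\<in>?C. u f * ?a f (\<Sum>g\<in>?C. v g * ?a g b))"
    by (rule sum.cong[OF refl]) (simp add: act_dmul act_sum act_mult sum_distrib_left mult_ac)
  also have "\<dots> = T n u (T n v b)" unfolding T_def ..
  finally show ?thesis .
qed

lemma T_add: "T n (u \<oplus>\<^bsub>skew_ring_Dn n\<^esub> v) b = T n u b + T n v b"
  unfolding T_def skew_add by (simp add: distrib_right sum.distrib)

lemma act_id: "dihedral_action n (False, 0) b = b"
  by (simp add: dihedral_action_def)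

lemma T_one: "T n \<one>\<^bsub>skew_ring_Dn n\<^esub> b = b"
  unfolding T_def skew_one using n1 by (simp add: act_id if_mult cong: if_cong)

lemma T_scale: "T n (skew_scale r u) b = fps_const (complex_of_real r) * T n u b"
  unfolding T_def skew_scale_def by (simp add: sum_distrib_left mult_ac)


lemma O_ring_am: "abelian_monoid (O_ring n)"
  by (rule abelian_monoidI) (simp_all add: O_add O_zero add.assoc add.commute)

lemma finsum_O: "finite A \<Longrightarrow> f ` A \<subseteq> O_set n \<Longrightarrow> finsum (O_ring n) f A = sum f A"
  by (rule finsum_eq_sum[OF O_ring_am]) simp_all

lemma H_carrier: "M \<in> carrier (H_ring n) \<longleftrightarrow> (\<forall>p q. p < n \<and> q < n \<longrightarrow> M p q \<in> O_set n) \<and> (\<forall>p q. \<not> (p < n \<and> q < n) \<longrightarrow> M p q = 0)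
   \<and> (\<forall>p q. p < q \<and> q < n \<longrightarrow> M p q $ 0 = 0)"
  unfolding H_carrier0 using XnO_iff by auto

lemma H_ring_am: "abelian_monoid (H_ring n)"
proof (rule abelian_monoidI)
  fix x y assume "x \<in> carrier (H_ring n)" "y \<in> carrier (H_ring n)"
  then show "x \<oplus>\<^bsub>H_ring n\<^esub> y \<in> carrier (H_ring n)" unfolding H_carrier H_add by (auto intro: O_add)
next
  show "\<zero>\<^bsub>H_ring n\<^esub> \<in> carrier (H_ring n)" unfolding H_carrier H_zero by (auto intro: O_zero)
next
  fix x y z assume "x \<in> carrier (H_ring n)" "y \<in> carrier (H_ring n)" "z \<in> carrier (H_ring n)"
  show "x \<oplus>\<^bsub>H_ring n\<^esub> y \<oplus>\<^bsub>H_ring n\<^esub> z = x \<oplus>\<^bsub>H_ring n\<^esub> (y \<oplus>\<^bsub>H_ring n\<^esub> z)"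
    unfolding H_add by (intro ext) (simp add: add.assoc)
next
  fix x assume "x \<in> carrier (H_ring n)"
  then show "\<zero>\<^bsub>H_ring n\<^esub> \<oplus>\<^bsub>H_ring n\<^esub> x = x" unfolding H_carrier H_add H_zero by (intro ext) auto
next
  fix x y assume "x \<in> carrier (H_ring n)" "y \<in> carrier (H_ring n)"
  show "x \<oplus>\<^bsub>H_ring n\<^esub> y = y \<oplus>\<^bsub>H_ring n\<^esub> x"
    unfolding H_add by (intro ext) (simp add: add.commute)
qed

lemma finsum_H2:
  fixes F :: "nat \<Rightarrow> nat \<Rightarrow> nat \<Rightarrow> real fps"
  assumes "F 0 \<in> carrier (H_ring n)" "F 1 \<in> carrier (H_ring n)"
  shows "finsum (H_ring n) F {..<2} = F 0 \<oplus>\<^bsub>H_ring n\<^esub> F 1"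
proof -
  interpret abelian_monoid "H_ring n" by (rule H_ring_am)
  have "{..<2::nat} = insert 0 (insert 1 {})" by auto
  then show ?thesis using assms by (simp add: finsum_insert)
qed

lemma H_mult_closed:
  assumes M: "M \<in> carrier (H_ring n)" and N: "N \<in> carrier (H_ring n)"
  shows "(\<lambda>p q. if p < n \<and> q < n then \<Sum>r<n. M p r * N r q else 0) \<in> carrier (H_ring n)"
  unfolding H_carrier
proof (intro conjI allI impI)
  fix p q assume pq: "p < n \<and> q < n"
  then show "(if p < n \<and> q < n then \<Sum>r<n. M p r * N r q else 0) \<in> O_set n"
    using M N unfolding H_carrier by (auto intro!: O_sum O_mult)
next
  fix p q assume "\<not> (p < n \<and> q < n)"
  then show "(if p < n \<and> q < n then \<Sum>r<n. M p r * N r q else 0) = 0" by (simp only: if_False)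
next
  fix p q assume pq: "p < q \<and> q < n"
  have "(M p r * N r q) $ 0 = 0" if "r < n" for r
  proof (cases "r \<le> p")
    case True then have "N r q $ 0 = 0" using N pq unfolding H_carrier by auto
    then show ?thesis by simp
  next
    case False then have "M p r $ 0 = 0" using M pq that unfolding H_carrier by auto
    then show ?thesis by simp
  qed
  then have s: "(\<Sum>r<n. M p r $ 0 * N r q $ 0) = 0" by (intro sum.neutral) simp
  then show "(if p < n \<and> q < n then \<Sum>r<n. M p r * N r q else 0) $ 0 = 0"
    using pq by (simp add: fps_sum_nth less_trans[of p q n])
qed

lemma H_mult:
  assumes M: "M \<in> carrier (H_ring n)" and N: "N \<in> carrier (H_ring n)"
  shows "M \<otimes>\<^bsub>H_ring n\<^esub> N = (\<lambda>p q. if p < n \<and> q < n then \<Sum>r<n. M p r * N r q else 0)"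
  unfolding H_mult0
proof (intro ext)
  fix p q
  show "(if p < n \<and> q < n then finsum (O_ring n) (\<lambda>r. M p r * N r q) {..<n} else 0) =
        (if p < n \<and> q < n then \<Sum>r<n. M p r * N r q else 0)"
    using M N unfolding H_carrier by (auto intro!: finsum_O O_mult)
qed


end

context nctx
begin

lemma T_E: "T n u (E j q) = (PP n u q * fps_const (ee j) + QQ n u q * fps_const (cnj (ee j))) * fps_X ^ q"
  unfolding E_def by (rule T_basis)

lemma crd_low: "p < q \<Longrightarrow> crd n (Z * fps_X ^ q) i p $ 0 = 0"
  by (simp add: crd_def ReIm_def Sp_def fps_X_power_mult_right_nth)

lemma hh_O: "hh n u i j p q \<in> O_set n"
  by (simp add: hh_def crd_O O_zero)

lemma hh_H: "i < 2 \<Longrightarrow> j < 2 \<Longrightarrow> hh n u i j \<in> carrier (H_ring n)"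
  unfolding H_carrier
proof (intro conjI allI impI)
  fix p q assume "i < 2" "j < 2" "p < q \<and> q < n"
  then show "hh n u i j p q $ 0 = 0" unfolding hh_def T_E by (simp add: crd_low)
qed (auto simp: hh_def crd_O)

lemma hh_carrier: "hh n u \<in> carrier (M2H_ring n)"
  unfolding M2_carrier
proof (intro CollectI conjI allI impI)
  fix i j :: nat assume "i < 2 \<and> j < 2" then show "hh n u i j \<in> carrier (H_ring n)" by (simp add: hh_H)
next
  fix i j :: nat assume "\<not> (i < 2 \<and> j < 2)" then show "hh n u i j = (\<lambda>p q. 0)" by (auto simp: hh_def)
qed

lemma T_E_recon: assumes "j < 2" "q < n"
  shows "T n u (E j q) = (\<Sum>i<2. \<Sum>p<n. E i p * emb (hh n u i j p q))"
proof -
  have "(\<Sum>i<2. \<Sum>p<n. E i p * emb (hh n u i j p q)) = (\<Sum>i<2. \<Sum>p<n. E i p * emb (crd n (T n u (E j q)) i p))"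
    by (intro sum.cong refl) (simp add: hh_def assms)
  then show ?thesis using recon[of "T n u (E j q)"] by simp
qed


lemma hh_add: "hh n (u \<oplus>\<^bsub>skew_ring_Dn n\<^esub> v) = hh n u \<oplus>\<^bsub>M2H_ring n\<^esub> hh n v"
proof (intro ext)
  fix i j p q
  show "hh n (u \<oplus>\<^bsub>skew_ring_Dn n\<^esub> v) i j p q = (hh n u \<oplus>\<^bsub>M2H_ring n\<^esub> hh n v) i j p q"
    unfolding M2_add H_add hh_def T_add crd_add by simp
qed

lemma E_nth: "E j q $ k = (if k = q then ee j else 0)"
  by (simp add: E_def)

lemma ReIm_ee: "i < 2 \<Longrightarrow> j < 2 \<Longrightarrow> (if i = 0 then Re (ee j) else Im (ee j)) = (if i = j then 1 else 0)"
  by (auto simp: ee_def less_2_cases_iff)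

lemma crd_E: assumes "i < 2" "j < 2" "p < n" "q < n"
  shows "crd n (E j q) i p = (if i = j \<and> p = q then 1 else 0)"
proof (rule fps_ext)
  fix m
  show "crd n (E j q) i p $ m = (if i = j \<and> p = q then 1 else 0) $ m"
  proof (cases "n dvd m \<and> p + m = q")
    case True
    then have "m = 0" using assms(4) by (auto dest: dvd_imp_le)
    have "i = 0 \<or> i = 1" "j = 0 \<or> j = 1" using assms by auto
    then show ?thesis using True \<open>m = 0\<close> by (auto simp: crd_def ReIm_def Sp_def E_nth ee_def)
  next
    case False
    then have "crd n (E j q) i p $ m = 0" by (auto simp: crd_def ReIm_def Sp_def E_nth)
    moreover have "(if i = j \<and> p = q then 1 else (0::real fps)) $ m = 0" using False by auto
    ultimately show ?thesis by simp
  qed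
qed

lemma hh_one: "hh n \<one>\<^bsub>skew_ring_Dn n\<^esub> = \<one>\<^bsub>M2H_ring n\<^esub>"
proof (intro ext)
  fix i j p q
  show "hh n \<one>\<^bsub>skew_ring_Dn n\<^esub> i j p q = \<one>\<^bsub>M2H_ring n\<^esub> i j p q"
    unfolding M2_one H_one hh_def T_one by (auto simp: crd_E)
qed

lemma M2_mult_hh: "(hh n u \<otimes>\<^bsub>M2H_ring n\<^esub> hh n v) i j p q =
   (if i < 2 \<and> j < 2 \<and> p < n \<and> q < n then \<Sum>k<2. \<Sum>r<n. hh n u i k p r * hh n v k j r q else 0)"
proof (cases "i < 2 \<and> j < 2")
  case True
  let ?F = "\<lambda>k. hh n u i k \<otimes>\<^bsub>H_ring n\<^esub> hh n v k j"
  have F: "?F k = (\<lambda>p q. if p < n \<and> q < n then \<Sum>r<n. hh n u i k p r * hh n v k j r q else 0)" if "k < 2" for k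
    using True that by (simp add: H_mult hh_H)
  have "?F 0 \<in> carrier (H_ring n)" "?F 1 \<in> carrier (H_ring n)"
    using F[of 0] F[of 1] H_mult_closed hh_H True by auto
  then have fs: "finsum (H_ring n) ?F {..<2} = ?F 0 \<oplus>\<^bsub>H_ring n\<^esub> ?F 1" by (rule finsum_H2)
  have e: "(hh n u \<otimes>\<^bsub>M2H_ring n\<^esub> hh n v) i j = ?F 0 \<oplus>\<^bsub>H_ring n\<^esub> ?F 1"
    using True fs unfolding M2_mult by simp
  have F0: "?F 0 = (\<lambda>p q. if p < n \<and> q < n then \<Sum>r<n. hh n u i 0 p r * hh n v 0 j r q else 0)" using F[of 0] by simp
  have F1: "?F 1 = (\<lambda>p q. if p < n \<and> q < n then \<Sum>r<n. hh n u i 1 p r * hh n v 1 j r q else 0)" using F[of 1] by simp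
  show ?thesis unfolding e H_add F0 F1 using True by (simp add: sum2)
next
  case False
  have "(hh n u \<otimes>\<^bsub>M2H_ring n\<^esub> hh n v) i j = (\<lambda>p q. 0)" by (simp only: M2_mult if_not_P[OF False])
  moreover have "\<not> (i < 2 \<and> j < 2 \<and> p < n \<and> q < n)" using False by blast
  ultimately show ?thesis by (simp only: if_not_P if_False)
qed

lemma T_lin': "c \<in> O_set n \<Longrightarrow> T n u (x * emb c) = emb c * T n u x"
  by (subst mult.commute) (rule T_lin)

lemma hh_mult: "hh n (u \<otimes>\<^bsub>skew_ring_Dn n\<^esub> v) = hh n u \<otimes>\<^bsub>M2H_ring n\<^esub> hh n v"
proof (intro ext)
  fix i j p q
  show "hh n (u \<otimes>\<^bsub>skew_ring_Dn n\<^esub> v) i j p q = (hh n u \<otimes>\<^bsub>M2H_ring n\<^esub> hh n v) i j p q"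
  proof (cases "i < 2 \<and> j < 2 \<and> p < n \<and> q < n")
    case True
    then have "hh n (u \<otimes>\<^bsub>skew_ring_Dn n\<^esub> v) i j p q = crd n (T n u (T n v (E j q))) i p"
      by (simp add: hh_def T_mult)
    also have "\<dots> = crd n (\<Sum>k<2. \<Sum>r<n. emb (hh n v k j r q) * T n u (E k r)) i p"
      using True by (simp only: T_E_recon[of j q v] T_sum_arg T_lin' hh_O)
    also have "\<dots> = (\<Sum>k<2. \<Sum>r<n. hh n v k j r q * crd n (T n u (E k r)) i p)"
      using True by (simp add: crd_sum crd_lin hh_O)
    also have "\<dots> = (\<Sum>k<2. \<Sum>r<n. hh n u i k p r * hh n v k j r q)"
      using True by (intro sum.cong refl) (simp add: hh_def mult.commute)
    finally show ?thesis using True by (simp add: M2_mult_hh)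
  next
    case False
    have "hh n (u \<otimes>\<^bsub>skew_ring_Dn n\<^esub> v) i j p q = 0" unfolding hh_def by (simp only: if_not_P[OF False] if_False)
    moreover have "(hh n u \<otimes>\<^bsub>M2H_ring n\<^esub> hh n v) i j p q = 0" by (simp only: M2_mult_hh if_not_P[OF False])
    ultimately show ?thesis by simp
  qed
qed

lemma hh_scale: "hh n (skew_scale r u) = M2H_scale r (hh n u)"
proof (intro ext)
  fix i j p q
  show "hh n (skew_scale r u) i j p q = M2H_scale r (hh n u) i j p q"
    using crd_lin[OF O_const, of p r] by (simp add: hh_def M2H_scale_def T_scale emb_const[symmetric])
qed


section \<open>DFT\<close>

lemma n_ne0: "(of_nat n :: complex) \<noteq> 0"
proof -
  have "n \<noteq> 0" using n1 by linarith
  then show ?thesis by (metis of_nat_eq_0_iff)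
qed

lemma inv_n: "fps_const (1 / of_nat n :: complex) * (a * fps_const (of_nat n)) = a"
proof -
  have "fps_const (1 / of_nat n :: complex) * fps_const (of_nat n) = fps_const 1"
  proof -
    have c: "(1 / of_nat n :: complex) * of_nat n = 1" using n_ne0 by (simp add: field_simps)
    show ?thesis by (simp only: fps_const_mult c)
  qed
  then show ?thesis by (simp add: mult_ac)
qed

lemma inner_sum: fixes a :: "complex fps" and x y :: "nat \<Rightarrow> complex" shows "(\<Sum>q\<in>A. a * fps_const (x q) * fps_const (y q)) = a * fps_const (\<Sum>q\<in>A. x q * y q)"
proof -
  have "a * fps_const (\<Sum>q\<in>A. x q * y q) = (\<Sum>q\<in>A. a * fps_const (x q * y q))"
    unfolding fps_const_sum by (rule Groups_Big.sum_distrib_left)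
  also have "\<dots> = (\<Sum>q\<in>A. a * fps_const (x q) * fps_const (y q))"
    by (intro sum.cong refl) (simp add: mult.assoc)
  finally show ?thesis by simp
qed

lemma idft:
  assumes w: "prim n w" and k: "k < n"
  shows "fps_const (1 / of_nat n) * (\<Sum>q<n. (\<Sum>k'<n. a k' * fps_const (w ^ (k' * q))) * fps_const (w ^ ((n - k) * q))) = a k"
proof -
  have "(\<Sum>q<n. (\<Sum>k'<n. a k' * fps_const (w ^ (k' * q))) * fps_const (w ^ ((n - k) * q)))
      = (\<Sum>q<n. \<Sum>k'<n. a k' * fps_const (w ^ (k' * q)) * fps_const (w ^ ((n - k) * q)))"
    by (simp add: sum_distrib_right)
  also have "\<dots> = (\<Sum>k'<n. \<Sum>q<n. a k' * fps_const (w ^ (k' * q)) * fps_const (w ^ ((n - k) * q)))"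
    by (rule sum.swap)
  also have "\<dots> = (\<Sum>k'<n. a k' * fps_const (\<Sum>q<n. w ^ (k' * q) * w ^ ((n - k) * q)))"
    by (simp only: inner_sum)
  also have "\<dots> = (\<Sum>k'<n. if k' = k then a k * fps_const (of_nat n) else 0)"
    by (intro sum.cong refl) (simp add: orth[OF w n1 _ k])
  also have "\<dots> = a k * fps_const (of_nat n)" using k by simp
  finally show ?thesis by (simp add: inv_n)
qed

lemma dft_inv:
  assumes w: "prim n w" and q': "q' < n"
  shows "(\<Sum>k<n. (fps_const (1 / of_nat n) * (\<Sum>q<n. F q * fps_const (w ^ ((n - q) * k)))) * fps_const (w ^ (k * q'))) = F q'"
proof -
  have "(\<Sum>k<n. (fps_const (1 / of_nat n) * (\<Sum>q<n. F q * fps_const (w ^ ((n - q) * k)))) * fps_const (w ^ (k * q')))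
     = fps_const (1 / of_nat n) * (\<Sum>k<n. \<Sum>q<n. F q * fps_const (w ^ ((n - q) * k)) * fps_const (w ^ (k * q')))"
    by (simp add: sum_distrib_left sum_distrib_right mult.assoc)
  also have "(\<Sum>k<n. \<Sum>q<n. F q * fps_const (w ^ ((n - q) * k)) * fps_const (w ^ (k * q')))
     = (\<Sum>q<n. \<Sum>k<n. F q * fps_const (w ^ ((n - q) * k)) * fps_const (w ^ (k * q')))"
    by (rule sum.swap)
  also have "\<dots> = (\<Sum>q<n. F q * fps_const (\<Sum>k<n. w ^ (q' * k) * w ^ ((n - q) * k)))"
    by (simp only: inner_sum mult.commute[of "w ^ ((n - _) * _)"] mult.commute[of _ q'])
  also have "\<dots> = (\<Sum>q<n. if q = q' then F q' * fps_const (of_nat n) else 0)"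
    by (intro sum.cong refl) (auto simp: orth[OF w n1 q'])
  also have "\<dots> = F q' * fps_const (of_nat n)" using q' by simp
  finally show ?thesis by (simp add: inv_n)
qed

lemma QQ_alt: "QQ n u q = (\<Sum>k<n. u (True, k) * fps_const (cnj (xi n) ^ (k * q)))"
  by (simp add: QQ_def)

section \<open>Bijectivity\<close>

lemma hh_inj:
  assumes u: "u \<in> carrier (skew_ring_Dn n)" and v: "v \<in> carrier (skew_ring_Dn n)" and e: "hh n u = hh n v"
  shows "u = v"
proof -
  have TE: "T n u (E j q) = T n v (E j q)" if "j < 2" "q < n" for j q
    using T_E_recon[OF that, of u] T_E_recon[OF that, of v] e by simp
  have PQ: "PP n u q = PP n v q \<and> QQ n u q = QQ n v q" if q: "q < n" for q
  proof -
    have c: "PP n u q * fps_const (ee j) + QQ n u q * fps_const (cnj (ee j)) = PP n v q * fps_const (ee j) + QQ n v q * fps_const (cnj (ee j))"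
      if "j < 2" for j
      using TE[OF that q] unfolding T_E by (rule X_cancel)
    have "PP n u q + QQ n u q = PP n v q + QQ n v q" using c[of 0] by (simp add: ee_def)
    moreover have "PP n u q * fps_const \<i> + QQ n u q * fps_const (- \<i>) = PP n v q * fps_const \<i> + QQ n v q * fps_const (- \<i>)"
      using c[of 1] by (simp add: ee_def)
    ultimately show ?thesis by (rule two_eqs)
  qed
  have F: "u (False, k) = fps_const (1 / of_nat n) * (\<Sum>q<n. PP n u q * fps_const (xi n ^ ((n - k) * q)))"
          "v (False, k) = fps_const (1 / of_nat n) * (\<Sum>q<n. PP n v q * fps_const (xi n ^ ((n - k) * q)))"
          "u (True, k) = fps_const (1 / of_nat n) * (\<Sum>q<n. QQ n u q * fps_const (cnj (xi n) ^ ((n - k) * q)))"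
          "v (True, k) = fps_const (1 / of_nat n) * (\<Sum>q<n. QQ n v q * fps_const (cnj (xi n) ^ ((n - k) * q)))"
    if k: "k < n" for k
    unfolding PP_def QQ_alt
    by (rule idft[OF prim_xi[OF n1] k, symmetric] idft[OF prim_cnj[OF prim_xi[OF n1]] k, symmetric])+
  show "u = v"
  proof (rule ext)
    fix g :: "bool \<times> nat"
    obtain s k where g: "g = (s, k)" by (cases g)
    show "u g = v g"
    proof (cases "k < n")
      case True
      have "(\<Sum>q<n. PP n u q * fps_const (xi n ^ ((n - k) * q))) = (\<Sum>q<n. PP n v q * fps_const (xi n ^ ((n - k) * q)))"
        "(\<Sum>q<n. QQ n u q * fps_const (cnj (xi n) ^ ((n - k) * q))) = (\<Sum>q<n. QQ n v q * fps_const (cnj (xi n) ^ ((n - k) * q)))"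
        using PQ by (intro sum.cong refl; simp)+
      then show ?thesis using F[OF True] g by (cases s) simp_all
    next
      case False
      then show ?thesis using u v g unfolding skew_carrier by auto
    qed
  qed
qed

lemma M_O: "M \<in> carrier (M2H_ring n) \<Longrightarrow> M i j p q \<in> O_set n"
  unfolding M2_carrier H_carrier by (cases "i < 2 \<and> j < 2"; cases "p < n \<and> q < n") (auto simp: O_zero)

lemma M_zero: "M \<in> carrier (M2H_ring n) \<Longrightarrow> \<not> (i < 2 \<and> j < 2 \<and> p < n \<and> q < n) \<Longrightarrow> M i j p q = 0"
  unfolding M2_carrier H_carrier by (cases "i < 2 \<and> j < 2") auto

lemma M_up: "M \<in> carrier (M2H_ring n) \<Longrightarrow> i < 2 \<Longrightarrow> j < 2 \<Longrightarrow> p < q \<Longrightarrow> q < n \<Longrightarrow> M i j p q $ 0 = 0"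
  unfolding M2_carrier H_carrier by auto

lemma hh_surj:
  assumes M: "M \<in> carrier (M2H_ring n)"
  shows "\<exists>u\<in>carrier (skew_ring_Dn n). hh n u = M"
proof -
  define Xf where "Xf j q = (\<Sum>i<2. \<Sum>p<n. E i p * emb (M i j p q))" for j q
  define Y where "Y j q = fps_shift q (Xf j q)" for j q
  have MO: "\<And>i p. (\<lambda>i p. M i j p q) i p \<in> O_set n" for j q using M_O[OF M] by simp
  have XY: "Xf j q = Y j q * fps_X ^ q" if jq: "j < 2" "q < n" for j q
  proof (rule fps_ext)
    fix m
    show "Xf j q $ m = (Y j q * fps_X ^ q) $ m"
    proof (cases "m < q")
      case True
      then have mm: "m mod n = m" "m - m mod n = 0" using jq by auto
      have "Xf j q $ m = (\<Sum>i<2. ee i * complex_of_real (M i j (m mod n) q $ (m - m mod n)))"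
        unfolding Xf_def by (rule decomp_nth[OF MO])
      also have "\<dots> = 0" unfolding mm sum2 using M_up[OF M _ jq(1) True jq(2)] by simp
      finally show ?thesis using True by (simp add: fps_X_power_mult_right_nth)
    next
      case False then show ?thesis by (simp add: Y_def fps_X_power_mult_right_nth)
    qed
  qed
  define Pt where "Pt q = fps_const (1/2) * (Y 0 q - fps_const \<i> * Y 1 q)" for q
  define Qt where "Qt q = fps_const (1/2) * (Y 0 q + fps_const \<i> * Y 1 q)" for q
  define u where "u = (\<lambda>(s, k). if k < n then (if s then fps_const (1 / of_nat n) * (\<Sum>q<n. Qt q * fps_const (cnj (xi n) ^ ((n - q) * k)))
                  else fps_const (1 / of_nat n) * (\<Sum>q<n. Pt q * fps_const (xi n ^ ((n - q) * k)))) else 0)"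
  have uc: "u \<in> carrier (skew_ring_Dn n)" unfolding skew_carrier u_def by auto
  have PPu: "PP n u q = Pt q" if q: "q < n" for q
  proof -
    have "PP n u q = (\<Sum>k<n. (fps_const (1 / of_nat n) * (\<Sum>q'<n. Pt q' * fps_const (xi n ^ ((n - q') * k)))) * fps_const (xi n ^ (k * q)))"
      unfolding PP_def u_def by (intro sum.cong refl) simp
    also have "\<dots> = Pt q" by (rule dft_inv[OF prim_xi[OF n1] q])
    finally show ?thesis .
  qed
  have QQu: "QQ n u q = Qt q" if q: "q < n" for q
  proof -
    have "QQ n u q = (\<Sum>k<n. (fps_const (1 / of_nat n) * (\<Sum>q'<n. Qt q' * fps_const (cnj (xi n) ^ ((n - q') * k)))) * fps_const (cnj (xi n) ^ (k * q)))"
      unfolding QQ_alt u_def by (intro sum.cong refl) simp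
    also have "\<dots> = Qt q" by (rule dft_inv[OF prim_cnj[OF prim_xi[OF n1]] q])
    finally show ?thesis .
  qed
  have TE: "T n u (E j q) = Xf j q" if jq: "j < 2" "q < n" for j q
  proof -
    have "Pt q * fps_const (ee j) + Qt q * fps_const (cnj (ee j)) = Y j q"
    proof -
      have "j = 0 \<or> j = 1" using jq by auto
      then show ?thesis unfolding Pt_def Qt_def using half_eqs[of "Y 0 q" "Y 1 q"] by (auto simp: ee_def)
    qed
    then show ?thesis unfolding T_E PPu[OF jq(2)] QQu[OF jq(2)] XY[OF jq] by simp
  qed
  have "hh n u = M"
  proof (intro ext)
    fix i j p q
    show "hh n u i j p q = M i j p q"
    proof (cases "i < 2 \<and> j < 2 \<and> p < n \<and> q < n")
      case True
      then have "hh n u i j p q = crd n (Xf j q) i p" by (simp add: hh_def TE)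
      also have "\<dots> = M i j p q" unfolding Xf_def using True by (intro uniq[OF MO]) auto
      finally show ?thesis .
    next
      case False then show ?thesis using M_zero[OF M False] unfolding hh_def by (simp only: if_not_P[OF False] if_False)
    qed
  qed
  then show ?thesis using uc by blast
qed

end

theorem proposition6p3:
  fixes n :: nat
  assumes "n \<ge> 1"
  shows "\<exists>h. h \<in> ring_iso (skew_ring_Dn n) (M2H_ring n) \<and>
             (\<forall>r::real. \<forall>u \<in> carrier (skew_ring_Dn n).
                h (skew_scale r u) = M2H_scale r (h u))"
proof -
  interpret nctx n using assms by unfold_locales
  have hom: "hh n \<in> ring_hom (skew_ring_Dn n) (M2H_ring n)"
    unfolding ring_hom_def using hh_carrier hh_mult hh_add hh_one by auto
  have inj: "inj_on (hh n) (carrier (skew_ring_Dn n))"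
    unfolding inj_on_def using hh_inj by blast
  have "hh n ` carrier (skew_ring_Dn n) = carrier (M2H_ring n)"
    using hh_carrier hh_surj by blast
  then have "bij_betw (hh n) (carrier (skew_ring_Dn n)) (carrier (M2H_ring n))"
    using inj unfolding bij_betw_def by blast
  then show ?thesis using hom hh_scale unfolding ring_iso_def by blast
qed

end
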